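(* For every positive integer $n$, $$M_e(\mathcal{D},n)-M_o(\mathcal{D},n)=\begin{cases} 1, & \text{if } n\in\mathcal{P} \text{ and } R(n) \text{ is odd and positive},\\ -1, & \text{if } n\in\mathcal{P} \text{ and } R(n) \text{ is not odd and positive},\\ 2, & \text{if } n\notin\mathcal{P},\ R(\lfloor n\rfloor_p) \text{ is odd and positive, and } n\equiv\lfloor n\rfloor_p \pmod 2,\\ -2, & \text{if } n\notin\mathcal{P},\ R(\lfloor n\rfloor_p) \text{ is even and positive, and } n\equiv\lfloor n\rfloor_p \pmod 2,\\ -2(-1)^{n-\lfloor n\rfloor_p}, & \text{if } n\notin\mathcal{P} \text{ and } R(\lfloor n\rfloor_p) \text{ is even and negative},\\ 0, & \text{otherwise}. \end{cases}$$
   Context: $M_e(\mathcal{D},n)$ (resp. $M_o(\mathcal{D},n)$) is the number of partitions of $n$ into distinct parts with even (resp. odd) crank, where for a partition into distinct parts the crank is its largest part if $1$ is not a part, and is (number of parts) $-2$ if $1$ is a part. $\mathcal{P}=\{m(3m+1)/2: m\in\mathbb{Z}\}$ is the set of (generalized) pentagonal numbers; for $n=m(3m+1)/2\in\mathcal{P}$ put $R(n)=m$ (well defined since distinct integers $m$ give distinct values). $\lfloor n\rfloor_p$ denotes the largest element of $\mathcal{P}$ that is $\le n$. *)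

theory Defs
  imports Main
begin

text \<open>A partition of n into distinct parts is identified with the finite set of its
  parts, a set of positive integers summing to n (all parts are then in {1..n}).\<close>
definition distinct_partitions :: "nat \<Rightarrow> nat set set" where
  "distinct_partitions n = {S. finite S \<and> 0 \<notin> S \<and> \<Sum>S = n}"

definition dcrank :: "nat set \<Rightarrow> int" where
  "dcrank S = (if 1 \<notin> S then int (Max S) else int (card S) - 2)"

definition M_e :: "nat \<Rightarrow> nat" where
  "M_e n = card {S \<in> distinct_partitions n. even (dcrank S)}"

definition M_o :: "nat \<Rightarrow> nat" where
  "M_o n = card {S \<in> distinct_partitions n. odd (dcrank S)}"

definition pent :: "int \<Rightarrow> int" where
  "pent m = m * (3 * m + 1) div 2"

definition pentagonals :: "int set" where
  "pentagonals = range pent"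

definition R :: "int \<Rightarrow> int" where
  "R n = (THE m. pent m = n)"

definition pfloor :: "int \<Rightarrow> int" where
  "pfloor n = Max {p \<in> pentagonals. p \<le> n}"

end

theory Submission
  imports Defs
begin


definition run :: "nat set \<Rightarrow> nat" where
  "run S = (LEAST j. Max S - j \<notin> S)"

lemma run_props:
  assumes "finite S" "S \<noteq> {}" "0 \<notin> S"
  shows "Max S - run S \<notin> S" "\<And>j. j < run S \<Longrightarrow> Max S - j \<in> S" "1 \<le> run S" "run S \<le> Max S"
proof -
  have ex: "Max S - Max S \<notin> S" using assms by simp
  show "Max S - run S \<notin> S" unfolding run_def by (rule LeastI[of _ "Max S"], rule ex)
  show "\<And>j. j < run S \<Longrightarrow> Max S - j \<in> S" unfolding run_def using not_less_Least by blast
  show "run S \<le> Max S" unfolding run_def by (rule Least_le, rule ex)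
  have "Max S \<in> S" using assms by simp
  then have "Max S - 0 \<in> S" by simp
  then show "1 \<le> run S" unfolding run_def
    by (metis (mono_tags, lifting) LeastI One_nat_def ex less_one not_less)
qed

lemma run_ge:
  assumes "finite S" "S \<noteq> {}" "0 \<notin> S" "\<And>j. j < k \<Longrightarrow> Max S - j \<in> S"
  shows "k \<le> run S"
  using run_props(1)[OF assms(1-3)] assms(4) not_less by blast

lemma run_eq:
  assumes "finite S" "S \<noteq> {}" "0 \<notin> S" "\<And>j. j < k \<Longrightarrow> Max S - j \<in> S" "Max S - k \<notin> S"
  shows "run S = k"
proof -
  have "k \<le> run S" using run_ge[of S k] assms by blast
  moreover have "\<not> k < run S" using run_props(2)[OF assms(1-3)] assms(5) by blast
  ultimately show ?thesis by simp
qed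

definition opA :: "nat set \<Rightarrow> nat set" where
  "opA S = insert (Suc (Max S)) (S - {Min S, Suc (Max S) - Min S})"
definition opB :: "nat set \<Rightarrow> nat set" where
  "opB S = insert (run S) (insert (Max S - run S) (S - {Max S}))"
definition condA :: "nat set \<Rightarrow> bool" where
  "condA S = (Min S \<le> run S \<and> (Min S = run S \<longrightarrow> Min S \<noteq> Suc (Max S) - run S))"
definition condB :: "nat set \<Rightarrow> bool" where
  "condB S = (run S < Min S \<and> (Min S = Suc (run S) \<longrightarrow> Min S \<noteq> Suc (Max S) - run S))"

lemma A_props:
  assumes fin: "finite S" and ne: "S \<noteq> {}" and z: "0 \<notin> S" and c: "condA S"
  shows "finite (opA S)" "opA S \<noteq> {}" "0 \<notin> opA S" "Max (opA S) = Suc (Max S)"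
        "card (opA S) = card S - 1" "\<Sum>(opA S) = \<Sum>S" "condB (opA S)" "opB (opA S) = S"
proof -
  define M where "M = Max S"
  define s where "s = Min S"
  define k where "k = run S"
  note rp = run_props[OF fin ne z, folded M_def k_def]
  have sS: "s \<in> S" using fin ne s_def by simp
  have MS: "M \<in> S" using fin ne M_def by simp
  have sle: "\<And>x. x \<in> S \<Longrightarrow> s \<le> x" using fin s_def by simp
  have leM: "\<And>x. x \<in> S \<Longrightarrow> x \<le> M" using fin M_def by simp
  have sk: "s \<le> k" and sk2: "s = k \<longrightarrow> s \<noteq> Suc M - k" using c unfolding condA_def s_def M_def k_def by auto
  have s1: "1 \<le> s" using sS z by (cases s) auto
  have bS: "Suc M - s \<in> S" using rp(2)[of "s - 1"] sk s1 by (simp add: Suc_diff_le)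
  have big: "2 * s < Suc M"
  proof (cases "s = Suc M - k")
    case True
    then have "s < k" using sk sk2 by auto
    then show ?thesis using True rp(4) by linarith
  next
    case False
    have "M - (k - 1) \<in> S" using rp(2)[of "k-1"] rp(3) by simp
    then have "s \<le> M - (k - 1)" using sle by blast
    moreover have "M - (k - 1) = Suc M - k" using rp(3) rp(4) by linarith
    moreover note False
    ultimately show ?thesis using sk rp(3) rp(4) by linarith
  qed
  have T: "opA S = insert (Suc M) (S - {s, Suc M - s})" unfolding opA_def M_def s_def ..
  show fT: "finite (opA S)" unfolding T using fin by simp
  show neT: "opA S \<noteq> {}" unfolding T by simp
  show "0 \<notin> opA S" unfolding T using z by simp
  have nM: "Suc M \<notin> S" using leM by fastforce
  have MT: "Max (opA S) = Suc M" unfolding T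
    by (rule Max_eqI) (use fin leM in force)+
  show "Max (opA S) = Suc (Max S)" using MT M_def by simp
  have neq: "s \<noteq> Suc M - s" using big by linarith
  have c2: "2 \<le> card S" using card_mono[of S "{s, Suc M - s}"] fin sS bS neq by simp
  show "card (opA S) = card S - 1" unfolding T using fin sS bS nM neq c2
    by (simp add: card_Diff_subset)
  have "\<Sum>(opA S) = Suc M + \<Sum>(S - {s, Suc M - s})" unfolding T using fin nM by simp
  moreover have "\<Sum>S = \<Sum>(S - {s, Suc M - s}) + (s + (Suc M - s))"
  proof -
    have "\<Sum>S = \<Sum>(S - {s, Suc M - s}) + \<Sum>{s, Suc M - s}"
      using fin sS bS sum.subset_diff[of "{s, Suc M - s}" S "\<lambda>x. x"] by simp
    then show ?thesis using neq by simp
  qed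
  ultimately show "\<Sum>(opA S) = \<Sum>S" using big by simp
  have elemT: "s < x" if x: "x \<in> opA S" for x
  proof (cases "x = Suc M")
    case True then show ?thesis using big by simp
  next
    case False
    then have "x \<in> S" "x \<noteq> s" using x unfolding T by auto
    then show ?thesis using sle[of x] by simp
  qed
  have runT: "run (opA S) = s"
  proof (rule run_eq[OF fT neT])
    show "0 \<notin> opA S" unfolding T using z by simp
    have "Suc M - s \<notin> opA S" unfolding T using big s1 by auto
    then show "Max (opA S) - s \<notin> opA S" using MT by simp
    fix j assume j: "j < s"
    show "Max (opA S) - j \<in> opA S"
    proof (cases "j = 0")
      case True then show ?thesis unfolding MT by (simp add: T)
    next
      case False
      have "j - 1 < k" using j sk by linarith
      then have mem: "M - (j - 1) \<in> S" using rp(2) by blast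
      have eq: "Suc M - j = M - (j - 1)" using False by arith
      have i1: "Suc M - j \<in> S" using mem unfolding eq .
      have i2: "Suc M - j \<noteq> s" using j big False by linarith
      have i3: "Suc M - j \<noteq> Suc M - s" using j big False by linarith
      have "Suc M - j \<in> opA S" unfolding T using i1 i2 i3 by blast
      then show ?thesis using MT by (simp only:)
    qed
  qed
  have minT: "s < Min (opA S)" using elemT fT neT by simp
  show "condB (opA S)" unfolding condB_def runT MT
  proof
    show "s < Min (opA S)" by (rule minT)
    show "Min (opA S) = Suc s \<longrightarrow> Min (opA S) \<noteq> Suc (Suc M) - s" using big by linarith
  qed
  show "opB (opA S) = S" unfolding opB_def runT MT
  proof -
    have "opA S - {Suc M} = S - {s, Suc M - s}" unfolding T using nM by auto
    then show "insert s (insert (Suc M - s) (opA S - {Suc M})) = S" using sS bS by blast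
  qed
qed

lemma B_props:
  assumes fin: "finite S" and ne: "S \<noteq> {}" and z: "0 \<notin> S" and c: "condB S"
  shows "finite (opB S)" "opB S \<noteq> {}" "0 \<notin> opB S" "Max (opB S) = Max S - 1"
        "card (opB S) = card S + 1" "\<Sum>(opB S) = \<Sum>S" "condA (opB S)" "opA (opB S) = S"
proof -
  define M where "M = Max S"
  define s where "s = Min S"
  define k where "k = run S"
  note rp = run_props[OF fin ne z, folded M_def k_def]
  have sS: "s \<in> S" using fin ne s_def by simp
  have MS: "M \<in> S" using fin ne M_def by simp
  have sle: "\<And>x. x \<in> S \<Longrightarrow> s \<le> x" using fin s_def by simp
  have leM: "\<And>x. x \<in> S \<Longrightarrow> x \<le> M" using fin M_def by simp
  have ks: "k < s" and ks2: "s = Suc k \<longrightarrow> s \<noteq> Suc M - k" using c unfolding condB_def s_def M_def k_def by auto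
  have M1: "1 \<le> M" using MS z by (cases M) auto
  have kS: "k \<notin> S" using ks sle by fastforce
  have MkS: "M - k \<notin> S" by (rule rp(1))
  have "M - (k - 1) \<in> S" using rp(2)[of "k - 1"] rp(3) by simp
  then have sb: "s \<le> M - (k - 1)" using sle by blast
  have kk: "k < M - k"
  proof -
    have e: "M - (k - 1) = Suc M - k" using rp(3) rp(4) by linarith
    have "s \<le> Suc M - k" using sb unfolding e .
    moreover have "\<not> (s = Suc k \<and> s = Suc M - k)" using ks2 by blast
    ultimately show ?thesis using ks rp(3) rp(4) by linarith
  qed
  have T: "opB S = insert k (insert (M - k) (S - {M}))" unfolding opB_def M_def k_def ..
  show fT: "finite (opB S)" unfolding T using fin by simp
  show neT: "opB S \<noteq> {}" unfolding T by simp
  show zT: "0 \<notin> opB S" unfolding T using z rp(3) kk by auto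
  have M1T: "M - 1 \<in> opB S"
  proof (cases "k = 1")
    case True then show ?thesis unfolding T by simp
  next
    case False
    then have "M - 1 \<in> S" using rp(2)[of 1] rp(3) by simp
    moreover have "M - 1 \<noteq> M" using M1 by simp
    ultimately show ?thesis unfolding T by blast
  qed
  have leT: "x \<le> M - 1" if x: "x \<in> opB S" for x
  proof -
    have "x = k \<or> x = M - k \<or> (x \<in> S \<and> x \<noteq> M)" using x unfolding T by blast
    then show ?thesis using kk rp(3) leM[of x] by auto
  qed
  have MT: "Max (opB S) = M - 1"
    by (rule Max_eqI[OF fT]) (use leT M1T in auto)
  show "Max (opB S) = Max S - 1" using MT M_def by simp
  have geT: "k \<le> x" if x: "x \<in> opB S" for x
  proof -
    have "x = k \<or> x = M - k \<or> (x \<in> S \<and> x \<noteq> M)" using x unfolding T by blast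
    then show ?thesis using kk ks sle[of x] by auto
  qed
  have mT: "Min (opB S) = k"
    by (rule Min_eqI[OF fT]) (use geT T in auto)
  have neq: "k \<noteq> M - k" using kk by simp
  have SM: "S - {M} \<subseteq> S" by blast
  have k_notin: "k \<notin> S - {M}" "M - k \<notin> S - {M}" using kS MkS by auto
  have cS: "card S = Suc (card (S - {M}))" using fin MS by (rule card_Suc_Diff1[symmetric])
  show "card (opB S) = card S + 1" unfolding T using fin k_notin neq cS by simp
  have sS': "\<Sum>S = M + \<Sum>(S - {M})" using fin MS by (simp add: sum.remove)
  have "\<Sum>(opB S) = k + ((M - k) + \<Sum>(S - {M}))" unfolding T using fin k_notin neq by simp
  then show "\<Sum>(opB S) = \<Sum>S" using sS' kk by simp
  have rT: "k \<le> run (opB S)"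
  proof (rule run_ge[OF fT neT zT])
    fix j assume j: "j < k"
    show "Max (opB S) - j \<in> opB S"
    proof (cases "j = k - 1")
      case True
      have "M - 1 - j = M - k" using True rp(3) by arith
      then show ?thesis unfolding MT by (simp add: T)
    next
      case False
      then have "j + 1 < k" using j by linarith
      then have mem: "M - (j + 1) \<in> S" using rp(2) by blast
      have e: "M - 1 - j = M - (j + 1)" by arith
      have "M - (j + 1) \<noteq> M" using M1 j kk by linarith
      then have "M - 1 - j \<in> opB S" unfolding T e using mem by blast
      then show ?thesis using MT by (simp only:)
    qed
  qed
  show "condA (opB S)" unfolding condA_def mT MT
  proof
    show "k \<le> run (opB S)" by (rule rT)
    show "k = run (opB S) \<longrightarrow> k \<noteq> Suc (M - 1) - run (opB S)" using kk M1 by auto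
  qed
  have sM: "Suc (M - 1) = M" using M1 by simp
  show "opA (opB S) = S" unfolding opA_def mT MT sM
  proof -
    have "opB S - {k, M - k} = S - {M}" unfolding T using kS MkS neq by blast
    then show "insert M (opB S - {k, M - k}) = S" using MS by blast
  qed
qed

lemma dp_finite: "finite (distinct_partitions n)"
proof (rule finite_subset)
  show "distinct_partitions n \<subseteq> Pow {1..n}"
  proof
    fix S assume S: "S \<in> distinct_partitions n"
    then have f: "finite S" "0 \<notin> S" "\<Sum>S = n" unfolding distinct_partitions_def by auto
    have "x \<in> {1..n}" if "x \<in> S" for x
      using member_le_sum[of x S "\<lambda>x. x"] f that by (cases x) auto
    then show "S \<in> Pow {1..n}" by blast
  qed
qed simp

lemma dp_ne: "S \<in> distinct_partitions n \<Longrightarrow> 1 \<le> n \<Longrightarrow> S \<noteq> {}"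
  unfolding distinct_partitions_def by auto

lemma involution_sum:
  fixes g :: "nat set \<Rightarrow> int"
  assumes n: "1 \<le> n"
    and sg: "\<And>S. S \<in> distinct_partitions n \<Longrightarrow> condA S \<Longrightarrow> g (opA S) = - g S"
  shows "(\<Sum>S\<in>distinct_partitions n. g S) =
         (\<Sum>S\<in>{S\<in>distinct_partitions n. \<not> condA S \<and> \<not> condB S}. g S)"
proof -
  define D where "D = distinct_partitions n"
  define XA where "XA = {S\<in>D. condA S}"
  define XB where "XB = {S\<in>D. condB S}"
  define Fx where "Fx = {S\<in>D. \<not> condA S \<and> \<not> condB S}"
  have fD: "finite D" unfolding D_def by (rule dp_finite)
  have Dm: "finite S" "S \<noteq> {}" "0 \<notin> S" "\<Sum>S = n" if "S \<in> D" for S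
    using that dp_ne[OF _ n, of S] unfolding D_def distinct_partitions_def by auto
  have AB: "\<not> (condA S \<and> condB S)" for S unfolding condA_def condB_def by auto
  have split: "D = XA \<union> (XB \<union> Fx)" unfolding XA_def XB_def Fx_def by auto
  have d1: "XA \<inter> (XB \<union> Fx) = {}" unfolding XA_def XB_def Fx_def using AB by auto
  have d2: "XB \<inter> Fx = {}" unfolding XB_def Fx_def by auto
  have fin: "finite XA" "finite XB" "finite Fx" using fD unfolding XA_def XB_def Fx_def by auto
  have "(\<Sum>S\<in>XA. g (opA S)) = (\<Sum>S\<in>XB. g S)"
  proof (rule sum.reindex_bij_witness[where i = opB and j = opA])
    fix a assume a: "a \<in> XA"
    then have a': "a \<in> D" "condA a" unfolding XA_def by auto
    note P = A_props[OF Dm(1-3)[OF a'(1)] a'(2)]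
    show "opB (opA a) = a" by (rule P(8))
    show "opA a \<in> XB" unfolding XB_def D_def distinct_partitions_def using P Dm[OF a'(1)] by auto
    show "g (opA a) = g (opA a)" ..
  next
    fix b assume b: "b \<in> XB"
    then have b': "b \<in> D" "condB b" unfolding XB_def by auto
    note P = B_props[OF Dm(1-3)[OF b'(1)] b'(2)]
    show "opA (opB b) = b" by (rule P(8))
    show "opB b \<in> XA" unfolding XA_def D_def distinct_partitions_def using P Dm[OF b'(1)] by auto
  qed
  moreover have "(\<Sum>S\<in>XA. g (opA S)) = - (\<Sum>S\<in>XA. g S)"
    using sg unfolding XA_def D_def by (simp add: sum_negf)
  ultimately have "(\<Sum>S\<in>XA. g S) + (\<Sum>S\<in>XB. g S) = 0" by simp
  moreover have "(\<Sum>S\<in>D. g S) = (\<Sum>S\<in>XA. g S) + ((\<Sum>S\<in>XB. g S) + (\<Sum>S\<in>Fx. g S))"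
    unfolding split using fin d1 d2 by (simp add: sum.union_disjoint)
  ultimately show ?thesis unfolding D_def[symmetric] Fx_def[symmetric] by simp
qed

lemma sum_block: "2 * \<Sum>{a..<a+k} + k = k * (2 * a + (k::nat))"
proof (induction k)
  case 0 then show ?case by simp
next
  case (Suc k)
  have "\<Sum>{a..<a + Suc k} = \<Sum>{a..<a+k} + (a + k)" by simp
  then show ?case using Suc by (simp add: algebra_simps)
qed

lemma block_props:
  assumes a: "1 \<le> a" and k: "1 \<le> k"
  shows "finite {a..<a+k}" "{a..<a+k} \<noteq> {}" "0 \<notin> {a..<a+k}" "Min {a..<a+k} = a"
        "Max {a..<a+k} = a + k - 1" "run {a..<a+k} = k" "card {a..<a+k} = k"
proof -
  show f: "finite {a..<a+k}" by simp
  show ne: "{a..<a+k} \<noteq> {}" using k by simp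
  show z: "0 \<notin> {a..<a+k}" using a by simp
  show "Min {a..<a+k} = a" using k by (intro Min_eqI) auto
  show M: "Max {a..<a+k} = a + k - 1" using k by (intro Max_eqI) auto
  show "run {a..<a+k} = k"
  proof (rule run_eq[OF f ne z])
    fix j assume "j < k" then show "Max {a..<a+k} - j \<in> {a..<a+k}" unfolding M by auto
  next
    show "Max {a..<a+k} - k \<notin> {a..<a+k}" unfolding M using a k by auto
  qed
  show "card {a..<a+k} = k" by simp
qed

lemma pent_even: "2 * pent m = m * (3 * m + 1)"
proof -
  have "even (m * (3 * m + 1))" by auto
  then show ?thesis unfolding pent_def by simp
qed

lemma pent_inj: assumes "pent a = pent b" shows "a = b"
proof -
  have "a * (3 * a + 1) = b * (3 * b + 1)" using pent_even[of a] pent_even[of b] assms by simp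
  then have "(a - b) * (3 * (a + b) + 1) = 0" by (simp add: algebra_simps)
  moreover have "3 * (a + b) + 1 \<noteq> 0" by presburger
  ultimately show ?thesis by simp
qed

lemma fix_char:
  assumes S: "S \<in> distinct_partitions n" and n: "1 \<le> n" and nA: "\<not> condA S" and nB: "\<not> condB S"
  shows "\<exists>k\<ge>1. (S = {k..<k+k} \<and> pent (- int k) = int n) \<or> (S = {k+1..<(k+1)+k} \<and> pent (int k) = int n)"
proof -
  have fin: "finite S" and z: "0 \<notin> S" and sm: "\<Sum>S = n" using S unfolding distinct_partitions_def by auto
  have ne: "S \<noteq> {}" using dp_ne[OF S n] .
  define M where "M = Max S"
  define s where "s = Min S"
  define k where "k = run S"
  note rp = run_props[OF fin ne z, folded M_def k_def]
  have sle: "\<And>x. x \<in> S \<Longrightarrow> s \<le> x" using fin s_def by simp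
  have leM: "\<And>x. x \<in> S \<Longrightarrow> x \<le> M" using fin M_def by simp
  have sS: "s \<in> S" using fin ne s_def by simp
  have cs: "s = Suc M - k \<and> (s = k \<or> s = Suc k)"
    using nA nB unfolding condA_def condB_def s_def[symmetric] M_def[symmetric] k_def[symmetric] by auto
  have Seq: "S = {s..<s+k}"
  proof
    show "S \<subseteq> {s..<s+k}" using sle leM cs rp(3) rp(4) by fastforce
    show "{s..<s+k} \<subseteq> S"
    proof
      fix x assume x: "x \<in> {s..<s+k}"
      then have "M - x < k" "M - (M - x) = x" using cs rp(3) rp(4) by auto
      then show "x \<in> S" using rp(2)[of "M - x"] by simp
    qed
  qed
  have s1: "1 \<le> s" using sS z by (cases s) auto
  have sb: "2 * n + k = k * (2 * s + k)" using sum_block[of s k] Seq sm by simp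
  then have sbi: "2 * int n + int k = int k * (2 * int s + int k)" by (metis of_nat_add of_nat_mult of_nat_numeral)
  show ?thesis
  proof (cases "s = k")
    case True
    have "2 * pent (- int k) = 2 * int n" unfolding pent_even using sbi True by (simp add: algebra_simps)
    then show ?thesis using True Seq rp(3) by auto
  next
    case False
    then have sk: "s = k + 1" using cs by linarith
    have "2 * pent (int k) = 2 * int n" unfolding pent_even using sbi sk by (simp add: algebra_simps)
    then show ?thesis using sk Seq rp(3) by auto
  qed
qed



definition blk :: "int \<Rightarrow> nat set" where
  "blk r = (if 0 < r then {nat r + 1..<(nat r + 1) + nat r} else {nat (-r)..<nat (-r) + nat (-r)})"

lemma pent0: "pent 0 = 0" unfolding pent_def by simp

lemma blk_in:
  assumes n: "1 \<le> n" and r: "pent r = int n"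
  shows "blk r \<in> {S\<in>distinct_partitions n. \<not> condA S \<and> \<not> condB S}"
proof -
  have r0: "r \<noteq> 0" using r n pent0 by auto
  show ?thesis
  proof (cases "0 < r")
    case True
    define k where "k = nat r"
    have k1: "1 \<le> k" using True k_def by simp
    have b: "blk r = {k+1..<(k+1)+k}" unfolding blk_def k_def using True by simp
    note P = block_props[of "k+1" k, OF _ k1]
    have "2 * int (\<Sum>{k+1..<(k+1)+k}) + int k = int k * (2 * (int k + 1) + int k)"
    proof -
      have "int (2 * \<Sum>{k+1..<(k+1)+k} + k) = int (k * (2 * (k + 1) + k))"
        using sum_block[of "k+1" k] by (rule arg_cong)
      then show ?thesis by (simp only: of_nat_add of_nat_mult of_nat_numeral of_nat_1)
    qed
    moreover have "2 * pent (int k) = int k * (3 * int k + 1)" by (rule pent_even)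
    moreover have "r = int k" using True k_def by simp
    ultimately have "int (\<Sum>{k+1..<(k+1)+k}) = int n" using r by (simp add: algebra_simps)
    then have "\<Sum>{k+1..<(k+1)+k} = n" by simp
    moreover have "\<not> condA {k+1..<(k+1)+k}" unfolding condA_def using P(4,6) k1 by simp
    moreover have "\<not> condB {k+1..<(k+1)+k}" unfolding condB_def using P(4,5,6) k1 by simp
    ultimately show ?thesis unfolding b distinct_partitions_def using k1 by simp
  next
    case False
    define k where "k = nat (-r)"
    have k1: "1 \<le> k" using False r0 k_def by simp
    have b: "blk r = {k..<k+k}" unfolding blk_def k_def using False by simp
    note P = block_props[of k k, OF k1 k1]
    have "2 * int (\<Sum>{k..<k+k}) + int k = int k * (2 * int k + int k)"
    proof -
      have "int (2 * \<Sum>{k..<k+k} + k) = int (k * (2 * k + k))"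
        using sum_block[of k k] by (rule arg_cong)
      then show ?thesis by (simp only: of_nat_add of_nat_mult of_nat_numeral of_nat_1)
    qed
    moreover have "2 * pent (- int k) = (- int k) * (3 * (- int k) + 1)" by (rule pent_even)
    moreover have "r = - int k" using False k_def by simp
    ultimately have "int (\<Sum>{k..<k+k}) = int n" using r by (simp add: algebra_simps)
    then have "\<Sum>{k..<k+k} = n" by (simp only: of_nat_eq_iff)
    moreover have "\<not> condA {k..<k+k}" unfolding condA_def using P(4,5,6) k1 by simp
    moreover have "\<not> condB {k..<k+k}" unfolding condB_def using P(4,6) k1 by simp
    ultimately show ?thesis unfolding b distinct_partitions_def using k1 by simp
  qed
qed

lemma fix_set:
  assumes n: "1 \<le> n" and r: "pent r = int n"
  shows "{S\<in>distinct_partitions n. \<not> condA S \<and> \<not> condB S} = {blk r}"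
proof
  show "{blk r} \<subseteq> {S\<in>distinct_partitions n. \<not> condA S \<and> \<not> condB S}" using blk_in[OF n r] by simp
  show "{S\<in>distinct_partitions n. \<not> condA S \<and> \<not> condB S} \<subseteq> {blk r}"
  proof
    fix S assume "S \<in> {S\<in>distinct_partitions n. \<not> condA S \<and> \<not> condB S}"
    then have S: "S \<in> distinct_partitions n" "\<not> condA S" "\<not> condB S" by auto
    obtain k where k: "k \<ge> 1" "(S = {k..<k+k} \<and> pent (- int k) = int n) \<or> (S = {k+1..<(k+1)+k} \<and> pent (int k) = int n)"
      using fix_char[OF S(1) n S(2,3)] by blast
    show "S \<in> {blk r}"
    proof (cases "S = {k..<k+k} \<and> pent (- int k) = int n")
      case True
      then have "r = - int k" using pent_inj r by metis
      then show ?thesis using True k(1) unfolding blk_def by simp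
    next
      case False
      then have "S = {k+1..<(k+1)+k}" "pent (int k) = int n" using k by auto
      moreover have "r = int k" using pent_inj r \<open>pent (int k) = int n\<close> by metis
      ultimately show ?thesis using k(1) unfolding blk_def by simp
    qed
  qed
qed

lemma fix_empty:
  assumes n: "1 \<le> n" and np: "int n \<notin> pentagonals"
  shows "{S\<in>distinct_partitions n. \<not> condA S \<and> \<not> condB S} = {}"
proof (rule ccontr)
  assume "{S\<in>distinct_partitions n. \<not> condA S \<and> \<not> condB S} \<noteq> {}"
  then obtain S where S: "S \<in> distinct_partitions n" "\<not> condA S" "\<not> condB S" by auto
  obtain k where "(pent (- int k) = int n) \<or> (pent (int k) = int n)"
    using fix_char[OF S(1) n S(2,3)] by blast
  then show False using np unfolding pentagonals_def by (metis rangeI)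
qed

definition Esum :: "nat \<Rightarrow> int" where
  "Esum n = (\<Sum>S\<in>distinct_partitions n. (-1) ^ card S)"
definition Fsum :: "nat \<Rightarrow> int" where
  "Fsum n = (\<Sum>S\<in>distinct_partitions n. (-1) ^ Max S)"

lemma E_inv:
  assumes n: "1 \<le> n"
  shows "Esum n = (\<Sum>S\<in>{S\<in>distinct_partitions n. \<not> condA S \<and> \<not> condB S}. (-1) ^ card S)"
  unfolding Esum_def
proof (rule involution_sum[OF n])
  fix S assume S: "S \<in> distinct_partitions n" "condA S"
  have f: "finite S" "S \<noteq> {}" "0 \<notin> S" using S(1) dp_ne[OF S(1) n] unfolding distinct_partitions_def by auto
  then have "card S \<ge> 1" by (simp add: Suc_leI card_gt_0_iff)
  then obtain c where c: "card S = Suc c" by (cases "card S") auto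
  show "(-1::int) ^ card (opA S) = - ((-1) ^ card S)" using A_props(5)[OF f S(2)] c by simp
qed

lemma F_inv:
  assumes n: "1 \<le> n"
  shows "Fsum n = (\<Sum>S\<in>{S\<in>distinct_partitions n. \<not> condA S \<and> \<not> condB S}. (-1) ^ Max S)"
  unfolding Fsum_def
proof (rule involution_sum[OF n])
  fix S assume S: "S \<in> distinct_partitions n" "condA S"
  have f: "finite S" "S \<noteq> {}" "0 \<notin> S" using S(1) dp_ne[OF S(1) n] unfolding distinct_partitions_def by auto
  show "(-1::int) ^ Max (opA S) = - ((-1) ^ Max S)" using A_props(4)[OF f S(2)] by simp
qed

lemma E_pent:
  assumes n: "1 \<le> n" and r: "pent r = int n"
  shows "Esum n = (-1) ^ nat \<bar>r\<bar>"
proof -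
  have r0: "r \<noteq> 0" using r n pent0 by auto
  have "card (blk r) = nat \<bar>r\<bar>"
  proof (cases "0 < r")
    case True then show ?thesis unfolding blk_def by simp
  next
    case False then show ?thesis unfolding blk_def by simp
  qed
  then show ?thesis unfolding E_inv[OF n] fix_set[OF n r] by simp
qed

lemma F_pent:
  assumes n: "1 \<le> n" and r: "pent r = int n"
  shows "Fsum n = (if 0 < r then 1 else -1)"
proof -
  have r0: "r \<noteq> 0" using r n pent0 by auto
  have "(-1::int) ^ Max (blk r) = (if 0 < r then 1 else -1)"
  proof (cases "0 < r")
    case True
    define k where "k = nat r"
    have k1: "1 \<le> k" using True k_def by simp
    have b: "blk r = {k+1..<(k+1)+k}" unfolding blk_def k_def using True by simp
    have "Max (blk r) = k + k" unfolding b using block_props(5)[of "k+1" k] k1 by simp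
    then show ?thesis using True by simp
  next
    case False
    define k where "k = nat (-r)"
    have k1: "1 \<le> k" using False r0 k_def by simp
    have b: "blk r = {k..<k+k}" unfolding blk_def k_def using False by simp
    have "Max (blk r) = Suc (2 * (k - 1))" unfolding b using block_props(5)[of k k] k1 by simp
    then show ?thesis using False by simp
  qed
  then show ?thesis unfolding F_inv[OF n] fix_set[OF n r] by simp
qed

lemma E_nonpent: "1 \<le> n \<Longrightarrow> int n \<notin> pentagonals \<Longrightarrow> Esum n = 0"
  unfolding E_inv fix_empty by simp

lemma F_nonpent: "1 \<le> n \<Longrightarrow> int n \<notin> pentagonals \<Longrightarrow> Fsum n = 0"
  unfolding F_inv fix_empty by simp



definition e0 :: "nat \<Rightarrow> int" where
  "e0 n = (\<Sum>S\<in>{S\<in>distinct_partitions n. 1 \<notin> S}. (-1) ^ card S)"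
definition e1 :: "nat \<Rightarrow> int" where
  "e1 n = (\<Sum>S\<in>{S\<in>distinct_partitions n. 1 \<in> S}. (-1) ^ card S)"
definition f0 :: "nat \<Rightarrow> int" where
  "f0 n = (\<Sum>S\<in>{S\<in>distinct_partitions n. 1 \<notin> S}. (-1) ^ Max S)"
definition f1 :: "nat \<Rightarrow> int" where
  "f1 n = (\<Sum>S\<in>{S\<in>distinct_partitions n. 1 \<in> S}. (-1) ^ Max S)"

lemma split_sum:
  "(\<Sum>S\<in>distinct_partitions n. g S) =
   (\<Sum>S\<in>{S\<in>distinct_partitions n. 1 \<notin> S}. g S) + (\<Sum>S\<in>{S\<in>distinct_partitions n. 1 \<in> S}. g S)"
proof -
  have "distinct_partitions n = {S\<in>distinct_partitions n. 1 \<notin> S} \<union> {S\<in>distinct_partitions n. 1 \<in> S}" by auto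
  moreover have "finite {S\<in>distinct_partitions n. 1 \<notin> S}" "finite {S\<in>distinct_partitions n. 1 \<in> S}"
    using dp_finite by auto
  ultimately show ?thesis by (metis (no_types, lifting) sum.union_disjoint disjoint_iff mem_Collect_eq)
qed

lemma Esum_split: "Esum n = e0 n + e1 n"
  unfolding Esum_def e0_def e1_def by (rule split_sum)
lemma Fsum_split: "Fsum n = f0 n + f1 n"
  unfolding Fsum_def f0_def f1_def by (rule split_sum)

lemma one_bij:
  "bij_betw (\<lambda>S. S - {1}) {S\<in>distinct_partitions (Suc n). 1 \<in> S} {S\<in>distinct_partitions n. 1 \<notin> S}"
proof (rule bij_betw_byWitness[where f' = "insert 1"])
  show "\<forall>a\<in>{S \<in> distinct_partitions (Suc n). 1 \<in> S}. insert 1 (a - {1}) = a" by auto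
  show "\<forall>a'\<in>{S \<in> distinct_partitions n. 1 \<notin> S}. insert 1 a' - {1} = a'" by auto
  show "(\<lambda>S. S - {1}) ` {S \<in> distinct_partitions (Suc n). 1 \<in> S} \<subseteq> {S \<in> distinct_partitions n. 1 \<notin> S}"
  proof
    fix T assume "T \<in> (\<lambda>S. S - {1}) ` {S \<in> distinct_partitions (Suc n). 1 \<in> S}"
    then obtain S where S: "S \<in> distinct_partitions (Suc n)" "1 \<in> S" "T = S - {1}" by auto
    have "\<Sum>S = 1 + \<Sum>(S - {1})" using S(1,2) unfolding distinct_partitions_def using sum.remove[of S 1 "\<lambda>x. x"] by simp
    then show "T \<in> {S \<in> distinct_partitions n. 1 \<notin> S}" using S unfolding distinct_partitions_def by auto
  qed
  show "insert 1 ` {S \<in> distinct_partitions n. 1 \<notin> S} \<subseteq> {S \<in> distinct_partitions (Suc n). 1 \<in> S}"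
  proof
    fix T assume "T \<in> insert 1 ` {S \<in> distinct_partitions n. 1 \<notin> S}"
    then obtain S where S: "S \<in> distinct_partitions n" "1 \<notin> S" "T = insert 1 S" by auto
    then show "T \<in> {S \<in> distinct_partitions (Suc n). 1 \<in> S}" unfolding distinct_partitions_def by auto
  qed
qed

lemma e1_Suc: "e1 (Suc n) = - e0 n"
proof -
  have "e1 (Suc n) = (\<Sum>S\<in>{S\<in>distinct_partitions (Suc n). 1 \<in> S}. - ((-1) ^ card (S - {1})))"
    unfolding e1_def
  proof (rule sum.cong[OF refl])
    fix S assume S: "S \<in> {S\<in>distinct_partitions (Suc n). 1 \<in> S}"
    then have "finite S" "1 \<in> S" unfolding distinct_partitions_def by auto
    then have "card S = Suc (card (S - {1}))" by (rule card_Suc_Diff1[symmetric])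
    then show "(-1::int) ^ card S = - ((-1) ^ card (S - {1}))" by simp
  qed
  also have "\<dots> = - (\<Sum>S\<in>{S\<in>distinct_partitions (Suc n). 1 \<in> S}. (-1) ^ card (S - {1}))"
    by (simp add: sum_negf)
  also have "(\<Sum>S\<in>{S\<in>distinct_partitions (Suc n). 1 \<in> S}. (-1::int) ^ card (S - {1})) = e0 n"
    unfolding e0_def using sum.reindex_bij_betw[OF one_bij, of "\<lambda>S. (-1::int) ^ card S"] by simp
  finally show ?thesis .
qed

lemma f1_Suc: assumes "1 \<le> n" shows "f1 (Suc n) = f0 n"
proof -
  have "f1 (Suc n) = (\<Sum>S\<in>{S\<in>distinct_partitions (Suc n). 1 \<in> S}. (-1) ^ Max (S - {1}))"
    unfolding f1_def
  proof (rule sum.cong[OF refl])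
    fix S assume S: "S \<in> {S\<in>distinct_partitions (Suc n). 1 \<in> S}"
    then have T: "S - {1} \<in> distinct_partitions n" using one_bij unfolding bij_betw_def by auto
    then have ne: "S - {1} \<noteq> {}" using dp_ne assms by blast
    have f: "finite S" "1 \<in> S" "0 \<notin> S" using S unfolding distinct_partitions_def by auto
    have "Max S = Max (insert 1 (S - {1}))" using f by (simp add: insert_absorb)
    also have "\<dots> = max 1 (Max (S - {1}))" by (rule Max_insert) (use f ne in auto)
    also have "\<dots> = Max (S - {1})"
    proof -
      obtain x where x: "x \<in> S - {1}" using ne by auto
      have "x \<le> Max (S - {1})" using f x by simp
      moreover have "x \<noteq> 0" using f x by (metis DiffD1)
      ultimately have "1 \<le> Max (S - {1})" by linarith
      then show ?thesis by simp
    qed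
    finally show "(-1::int) ^ Max S = (-1) ^ Max (S - {1})" by simp
  qed
  also have "\<dots> = f0 n"
    unfolding f0_def using sum.reindex_bij_betw[OF one_bij, of "\<lambda>S. (-1::int) ^ Max S"] by simp
  finally show ?thesis .
qed

lemma dp0: "distinct_partitions 0 = {{}}"
  unfolding distinct_partitions_def by (auto simp: sum_eq_0_iff)

lemma e0_0: "e0 0 = 1"
proof -
  have "{S\<in>distinct_partitions 0. 1 \<notin> S} = {{}}" unfolding dp0 by auto
  then show ?thesis unfolding e0_def by simp
qed

lemma dp1: "distinct_partitions 1 = {{1}}"
proof
  show "{{1}} \<subseteq> distinct_partitions 1" unfolding distinct_partitions_def by simp
  show "distinct_partitions 1 \<subseteq> {{1}}"
  proof
    fix S assume S: "S \<in> distinct_partitions 1"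
    have "S \<noteq> {}" using dp_ne[OF S] by simp
    moreover have "S \<subseteq> {1}"
    proof
      fix x assume "x \<in> S"
      then have a: "x \<le> 1" using member_le_sum[of x S "\<lambda>x. x"] S unfolding distinct_partitions_def by auto
      have z: "0 \<notin> S" using S unfolding distinct_partitions_def by auto
      have "x \<noteq> 0" using z \<open>x \<in> S\<close> by metis
      with a show "x \<in> {1}" by simp
    qed
    ultimately show "S \<in> {{1}}" by auto
  qed
qed

lemma f0_1: "f0 1 = 0"
  unfolding f0_def dp1 by simp

lemma main_split:
  assumes n: "1 \<le> n"
  shows "int (M_e n) - int (M_o n) = e1 n + f0 n"
proof -
  define D where "D = distinct_partitions n"
  define w where "w S = (if even (dcrank S) then 1 else (-1::int))" for S
  have fD: "finite D" unfolding D_def by (rule dp_finite)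
  have "(\<Sum>S\<in>D. w S) = (\<Sum>S\<in>{S\<in>D. even (dcrank S)}. w S) + (\<Sum>S\<in>{S\<in>D. odd (dcrank S)}. w S)"
  proof -
    have "D = {S\<in>D. even (dcrank S)} \<union> {S\<in>D. odd (dcrank S)}" by auto
    moreover have "{S\<in>D. even (dcrank S)} \<inter> {S\<in>D. odd (dcrank S)} = {}" by auto
    ultimately show ?thesis using fD by (metis (no_types, lifting) sum.union_disjoint finite_Un)
  qed
  also have "\<dots> = int (M_e n) - int (M_o n)"
    unfolding M_e_def M_o_def D_def[symmetric] w_def by simp
  finally have 1: "int (M_e n) - int (M_o n) = (\<Sum>S\<in>D. w S)" by simp
  have 2: "(\<Sum>S\<in>D. w S) = (\<Sum>S\<in>{S\<in>D. 1 \<notin> S}. w S) + (\<Sum>S\<in>{S\<in>D. 1 \<in> S}. w S)"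
    unfolding D_def by (rule split_sum)
  have 3: "(\<Sum>S\<in>{S\<in>D. 1 \<notin> S}. w S) = f0 n" unfolding f0_def D_def[symmetric]
  proof (rule sum.cong[OF refl])
    fix S assume "S \<in> {S\<in>D. 1 \<notin> S}"
    then show "w S = (-1) ^ Max S" unfolding w_def dcrank_def by simp
  qed
  have 4: "(\<Sum>S\<in>{S\<in>D. 1 \<in> S}. w S) = e1 n" unfolding e1_def D_def[symmetric]
  proof (rule sum.cong[OF refl])
    fix S assume "S \<in> {S\<in>D. 1 \<in> S}"
    then show "w S = (-1) ^ card S" unfolding w_def dcrank_def by simp
  qed
  show ?thesis using 1 2 3 4 by simp
qed



definition sg :: "int \<Rightarrow> int" where "sg x = (if even x then 1 else -1)"

lemma sg_pow: "(-1::int) ^ k = sg (int k)"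
  by (induction k) (auto simp: sg_def)

lemma sg_Suc: "sg (x + 1) = - sg x" unfolding sg_def by auto
lemma sg_minus1: "sg (x - 1) = - sg x" unfolding sg_def by auto
lemma sg_neg: "sg (- x) = sg x" unfolding sg_def by auto

lemma pent_nonneg: "0 \<le> pent m"
proof -
  have "0 \<le> m * (3 * m + 1)"
  proof (cases "0 \<le> m")
    case True then show ?thesis by simp
  next
    case False then have "m \<le> 0" "3 * m + 1 \<le> 0" by auto
    then show ?thesis by (simp add: mult_nonpos_nonpos)
  qed
  then show ?thesis using pent_even[of m] by simp
qed

lemma pent_diff: "2 * (pent a - pent b) = (a - b) * (3 * (a + b) + 1)"
  using pent_even[of a] pent_even[of b] by (simp add: algebra_simps)

lemma R_pent: "R (pent m) = m"
  unfolding R_def by (rule the_equality) (auto dest: pent_inj)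

lemma pent_in: "pent m \<in> pentagonals" unfolding pentagonals_def by simp

lemma pf_set:
  assumes "0 \<le> x"
  shows "finite {p \<in> pentagonals. p \<le> x}" "0 \<in> {p \<in> pentagonals. p \<le> x}"
proof -
  have "{p \<in> pentagonals. p \<le> x} \<subseteq> {0..x}" unfolding pentagonals_def using pent_nonneg by auto
  then show "finite {p \<in> pentagonals. p \<le> x}" using finite_subset by blast
  show "0 \<in> {p \<in> pentagonals. p \<le> x}" using pent_in[of 0] pent0 assms by simp
qed

lemma pf_props:
  assumes "0 \<le> x"
  shows "pfloor x \<in> pentagonals" "pfloor x \<le> x" "\<And>p. p \<in> pentagonals \<Longrightarrow> p \<le> x \<Longrightarrow> p \<le> pfloor x"
proof -
  note P = pf_set[OF assms]
  have ne: "{p \<in> pentagonals. p \<le> x} \<noteq> {}" using P(2) by blast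
  have "pfloor x \<in> {p \<in> pentagonals. p \<le> x}" unfolding pfloor_def using Max_in[OF P(1) ne] .
  then show "pfloor x \<in> pentagonals" "pfloor x \<le> x" by auto
  fix p assume "p \<in> pentagonals" "p \<le> x"
  then show "p \<le> pfloor x" unfolding pfloor_def using P(1) by simp
qed

lemma pf_eqI:
  assumes "0 \<le> x" "q \<in> pentagonals" "q \<le> x" "\<And>p. p \<in> pentagonals \<Longrightarrow> p \<le> x \<Longrightarrow> p \<le> q"
  shows "pfloor x = q"
  using pf_props[OF assms(1)] assms(2-4) by (meson antisym)

lemma pf_self: "x \<in> pentagonals \<Longrightarrow> pfloor x = x"
  using pf_eqI[of x x] pent_nonneg unfolding pentagonals_def by auto

lemma pf_step:
  assumes "0 \<le> x" "x + 1 \<notin> pentagonals"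
  shows "pfloor (x + 1) = pfloor x"
proof (rule pf_eqI)
  show "0 \<le> x + 1" using assms by simp
  show "pfloor x \<in> pentagonals" "pfloor x \<le> x + 1" using pf_props[OF assms(1)] by auto
  fix p assume p: "p \<in> pentagonals" "p \<le> x + 1"
  then have "p \<le> x" using assms(2) by (cases "p = x + 1") auto
  then show "p \<le> pfloor x" using pf_props(3)[OF assms(1) p(1)] by simp
qed

lemma gap1:
  assumes r: "1 \<le> r"
  shows "pent m \<le> pent (-r) \<or> pent r \<le> pent m"
proof (cases "r \<le> m")
  case True
  have "0 \<le> (m - r) * (3 * (m + r) + 1)" using True r by simp
  then show ?thesis using pent_diff[of m r] by simp
next
  case False
  show ?thesis
  proof (cases "m \<le> -r - 1")
    case True
    have "0 \<le> (m - r) * (3 * (m + r) + 1)" using True r False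
      by (intro mult_nonpos_nonpos) auto
    then show ?thesis using pent_diff[of m r] by simp
  next
    case False2: False
    have "(m - (-r)) * (3 * (m + (-r)) + 1) \<le> 0" using False2 False r
      by (intro mult_nonneg_nonpos) auto
    then show ?thesis using pent_diff[of m "-r"] by simp
  qed
qed

lemma gap2:
  assumes s: "1 \<le> s"
  shows "pent m \<le> pent (s - 1) \<or> pent (-s) \<le> pent m"
proof (cases "s \<le> m")
  case True
  have "0 \<le> (m - (-s)) * (3 * (m + (-s)) + 1)" using True s by simp
  then show ?thesis using pent_diff[of m "-s"] by simp
next
  case False
  show ?thesis
  proof (cases "m \<le> -s")
    case True
    have "0 \<le> (m - (-s)) * (3 * (m + (-s)) + 1)" using True s False
      by (intro mult_nonpos_nonpos) auto
    then show ?thesis using pent_diff[of m "-s"] by simp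
  next
    case False2: False
    have "(m - (s - 1)) * (3 * (m + (s - 1)) + 1) \<le> 0" using False2 False s
      by (intro mult_nonpos_nonneg) auto
    then show ?thesis using pent_diff[of m "s - 1"] by simp
  qed
qed

lemma pred1:
  assumes r: "1 \<le> r"
  shows "pfloor (pent r - 1) = pent (-r)" "pent r - pent (-r) = r"
proof -
  show d: "pent r - pent (-r) = r" using pent_diff[of r "-r"] by simp
  show "pfloor (pent r - 1) = pent (-r)"
  proof (rule pf_eqI)
    show "0 \<le> pent r - 1" using d pent_nonneg[of "-r"] r by simp
    show "pent (-r) \<in> pentagonals" by (rule pent_in)
    show "pent (-r) \<le> pent r - 1" using d r by simp
    fix p assume "p \<in> pentagonals" "p \<le> pent r - 1"
    then obtain m where "p = pent m" "pent m < pent r" unfolding pentagonals_def by auto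
    then show "p \<le> pent (-r)" using gap1[OF r, of m] by auto
  qed
qed

lemma pred2:
  assumes s: "1 \<le> s"
  shows "pfloor (pent (-s) - 1) = pent (s - 1)" "pent (-s) - pent (s - 1) = 2 * s - 1"
proof -
  have "2 * (pent (-s) - pent (s - 1)) = (-s - (s - 1)) * (3 * (-s + (s - 1)) + 1)" by (rule pent_diff)
  then show d: "pent (-s) - pent (s - 1) = 2 * s - 1" by (simp add: algebra_simps)
  show "pfloor (pent (-s) - 1) = pent (s - 1)"
  proof (rule pf_eqI)
    show "0 \<le> pent (-s) - 1" using d pent_nonneg[of "s - 1"] s by simp
    show "pent (s - 1) \<in> pentagonals" by (rule pent_in)
    show "pent (s - 1) \<le> pent (-s) - 1" using d s by simp
    fix p assume "p \<in> pentagonals" "p \<le> pent (-s) - 1"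
    then obtain m where "p = pent m" "pent m < pent (-s)" unfolding pentagonals_def by auto
    then show "p \<le> pent (s - 1)" using gap2[OF s, of m] by auto
  qed
qed



definition cc :: "int \<Rightarrow> int" where
  "cc r = (if 0 < r then (if odd r then 1 else -1) else (if odd r then 0 else -2))"

lemma E_sg: "1 \<le> n \<Longrightarrow> pent r = int n \<Longrightarrow> Esum n = sg r"
  using E_pent[of n r] sg_pow[of "nat \<bar>r\<bar>"] unfolding sg_def by auto

lemma pent_ne0: "pent r = int (Suc n) \<Longrightarrow> r \<noteq> 0"
  using pent0 by auto

lemma e0_closed: "e0 n = (if 0 \<le> R (pfloor (int n)) then sg (R (pfloor (int n))) else 0)"
proof (induction n)
  case 0
  have "pfloor 0 = 0" using pf_self[of 0] pent_in[of 0] pent0 by simp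
  moreover have "R 0 = 0" using R_pent[of 0] pent0 by simp
  ultimately show ?case using e0_0 unfolding sg_def by simp
next
  case (Suc n)
  have rec: "e0 (Suc n) = Esum (Suc n) + e0 n" using Esum_split[of "Suc n"] e1_Suc[of n] by simp
  have sn: "int (Suc n) = int n + 1" by simp
  show ?case
  proof (cases "int (Suc n) \<in> pentagonals")
    case False
    have "Esum (Suc n) = 0" using E_nonpent[of "Suc n"] False by simp
    moreover have "pfloor (int (Suc n)) = pfloor (int n)" unfolding sn
      proof -
        have np: "int n + 1 \<notin> pentagonals" using \<open>int (Suc n) \<notin> pentagonals\<close> sn by metis
        show "pfloor (int n + 1) = pfloor (int n)" using pf_step[OF _ np] by simp
      qed
    ultimately show ?thesis using rec Suc.IH by simp
  next
    case True
    then obtain r where r: "pent r = int (Suc n)" unfolding pentagonals_def by auto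
    have r0: "r \<noteq> 0" using pent_ne0[OF r] .
    have pf: "pfloor (int (Suc n)) = pent r" using pf_self True r by simp
    have E: "Esum (Suc n) = sg r" using E_sg[OF _ r] by simp
    show ?thesis
    proof (cases "0 < r")
      case pos: True
      have "pfloor (int n) = pent (-r)" using pred1(1)[of r] pos r by simp
      then have "e0 n = 0" using Suc.IH R_pent[of "-r"] pos by simp
      then show ?thesis using rec E pf R_pent[of r] pos by simp
    next
      case neg: False
      define s where "s = -r"
      have s1: "1 \<le> s" using neg r0 s_def by simp
      have "pfloor (int n) = pent (s - 1)" using pred2(1)[OF s1] r s_def by simp
      then have "e0 n = sg (s - 1)" using Suc.IH R_pent[of "s - 1"] s1 by simp
      then have "e0 n = - sg r" using sg_minus1[of s] sg_neg[of r] s_def by simp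
      then show ?thesis using rec E pf R_pent[of r] neg r0 by simp
    qed
  qed
qed

lemma F_val: "1 \<le> n \<Longrightarrow> pent r = int n \<Longrightarrow> Fsum n = (if 0 < r then 1 else -1)"
  by (rule F_pent)

lemma f0_closed: "f0 (Suc m) = sg (int (Suc m) - pfloor (int (Suc m))) * cc (R (pfloor (int (Suc m))))"
proof (induction m)
  case 0
  have p1: "pent (-1) = 1" unfolding pent_def by simp
  have "pfloor 1 = 1" using pf_self[of 1] pent_in[of "-1"] p1 by simp
  moreover have "R 1 = -1" using R_pent[of "-1"] p1 by simp
  ultimately show ?case using f0_1 unfolding cc_def by simp
next
  case (Suc m)
  define N where "N = Suc m"
  have IH: "f0 N = sg (int N - pfloor (int N)) * cc (R (pfloor (int N)))" using Suc.IH N_def by simp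
  have rec: "f0 (Suc N) = Fsum (Suc N) - f0 N" using Fsum_split[of "Suc N"] f1_Suc[of N] N_def by simp
  have sn: "int (Suc N) = int N + 1" by simp
  have "f0 (Suc N) = sg (int (Suc N) - pfloor (int (Suc N))) * cc (R (pfloor (int (Suc N))))"
  proof (cases "int (Suc N) \<in> pentagonals")
    case False
    have "Fsum (Suc N) = 0" using F_nonpent[of "Suc N"] False by simp
    moreover have pf: "pfloor (int (Suc N)) = pfloor (int N)" unfolding sn
      proof -
        have np: "int N + 1 \<notin> pentagonals" using \<open>int (Suc N) \<notin> pentagonals\<close> sn by metis
        show "pfloor (int N + 1) = pfloor (int N)" using pf_step[OF _ np] by simp
      qed
    moreover have e: "int (Suc N) - pfloor (int N) = (int N - pfloor (int N)) + 1" by simp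
    have "sg (int (Suc N) - pfloor (int N)) = - sg (int N - pfloor (int N))" unfolding e by (rule sg_Suc)
    ultimately show ?thesis using rec IH by simp
  next
    case True
    then obtain r where r: "pent r = int (Suc N)" unfolding pentagonals_def by auto
    have r0: "r \<noteq> 0" using pent_ne0[OF r] .
    have pf: "pfloor (int (Suc N)) = pent r" using pf_self True r by simp
    have F: "Fsum (Suc N) = (if 0 < r then 1 else -1)" using F_val[OF _ r] by simp
    have Rr: "R (pfloor (int (Suc N))) = r" using pf R_pent by simp
    have sg0: "sg (int (Suc N) - pfloor (int (Suc N))) = 1" using pf r unfolding sg_def by simp
    show ?thesis
    proof (cases "0 < r")
      case pos: True
      have "pfloor (int N) = pent (-r)" using pred1(1)[of r] pos r by simp
      moreover have "pent r - pent (-r) = r" using pred1(2)[of r] pos by simp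
      ultimately have "int N - pfloor (int N) = r - 1" "R (pfloor (int N)) = - r" using r R_pent[of "-r"] by simp_all
      then have "f0 N = sg (r - 1) * cc (-r)" using IH by simp
      then have "f0 (Suc N) = 1 + sg r * cc (-r)" using rec F pos sg_minus1[of r] by simp
      also have "\<dots> = cc r" using pos unfolding cc_def sg_def by auto
      finally show ?thesis using sg0 Rr by simp
    next
      case neg: False
      define s where "s = -r"
      have s1: "1 \<le> s" using neg r0 s_def by simp
      have s2: "2 \<le> s"
      proof (rule ccontr)
        assume "\<not> 2 \<le> s"
        then have "s = 1" using s1 by simp
        then have "pent r = 1" using s_def unfolding pent_def by simp
        then show False using r N_def by simp
      qed
      have "pfloor (int N) = pent (s - 1)" using pred2(1)[OF s1] r s_def by simp
      moreover have "pent (-s) - pent (s - 1) = 2 * s - 1" using pred2(2)[OF s1] .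
      ultimately have "int N - pfloor (int N) = 2 * s - 2" "R (pfloor (int N)) = s - 1" using r s_def R_pent[of "s - 1"] by simp_all
      then have "f0 N = sg (2 * s - 2) * cc (s - 1)" using IH by simp
      then have "f0 N = cc (s - 1)" unfolding sg_def by simp
      then have "f0 (Suc N) = -1 - cc (s - 1)" using rec F neg by simp
      also have "\<dots> = cc r" using s2 s_def unfolding cc_def by auto
      finally show ?thesis using sg0 Rr by simp
    qed
  qed
  then show ?case using N_def by simp
qed



theorem theorem1p7:
  fixes n :: nat
  assumes "n \<ge> 1"
  shows "int (M_e n) - int (M_o n) =
    (let k = int n; f = pfloor k in
     if k \<in> pentagonals \<and> odd (R k) \<and> R k > 0 then 1
     else if k \<in> pentagonals then -1
     else if odd (R f) \<and> R f > 0 \<and> k mod 2 = f mod 2 then 2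
     else if even (R f) \<and> R f > 0 \<and> k mod 2 = f mod 2 then -2
     else if even (R f) \<and> R f < 0 then -2 * (-1) ^ nat (k - f)
     else 0)"
proof -
  obtain m where nm: "n = Suc m" using assms by (cases n) auto
  have main: "int (M_e n) - int (M_o n) = - e0 m + f0 (Suc m)"
    using main_split[OF assms] e1_Suc[of m] nm by simp
  define k where "k = int n"
  define f where "f = pfloor k"
  have km: "k = int m + 1" using k_def nm by simp
  have F0: "f0 (Suc m) = sg (k - f) * cc (R f)" using f0_closed[of m] k_def f_def nm by simp
  have "int (M_e n) - int (M_o n) =
     (if k \<in> pentagonals \<and> odd (R k) \<and> R k > 0 then 1
     else if k \<in> pentagonals then -1
     else if odd (R f) \<and> R f > 0 \<and> k mod 2 = f mod 2 then 2
     else if even (R f) \<and> R f > 0 \<and> k mod 2 = f mod 2 then -2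
     else if even (R f) \<and> R f < 0 then -2 * (-1) ^ nat (k - f)
     else 0)"
  proof (cases "k \<in> pentagonals")
    case True
    then obtain r where r: "pent r = k" unfolding pentagonals_def by auto
    have r0: "r \<noteq> 0" using pent_ne0[of r m] r km by simp
    have ff: "f = k" using pf_self[OF True] f_def by simp
    have Rk: "R k = r" using r R_pent by metis
    have F0': "f0 (Suc m) = cc r" using F0 ff Rk unfolding sg_def by simp
    show ?thesis
    proof (cases "0 < r")
      case pos: True
      have "pfloor (int m) = pent (-r)" using pred1(1)[of r] pos r km by simp
      then have "e0 m = 0" using e0_closed[of m] R_pent[of "-r"] pos by simp
      then show ?thesis using main F0' True Rk pos unfolding cc_def by simp
    next
      case neg: False
      define s where "s = -r"
      have s1: "1 \<le> s" using neg r0 s_def by simp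
      have "pfloor (int m) = pent (s - 1)" using pred2(1)[OF s1] r s_def km by simp
      then have "e0 m = sg (s - 1)" using e0_closed[of m] R_pent[of "s - 1"] s1 by simp
      then have "e0 m = - sg r" using sg_minus1[of s] sg_neg[of r] s_def by simp
      then show ?thesis using main F0' True Rk neg r0 unfolding cc_def sg_def by auto
    qed
  next
    case False
    have k0: "0 \<le> int m" by simp
    have np: "int m + 1 \<notin> pentagonals" using False km by simp
    have ff: "f = pfloor (int m)" using pf_step[OF k0 np] f_def km by simp
    have fP: "f \<in> pentagonals" "f \<le> k" using pf_props[of k] f_def km by auto
    obtain r where r: "pent r = f" using fP(1) unfolding pentagonals_def by auto
    have Rf: "R f = r" using r R_pent by metis
    have p1: "pent (-1) = 1" unfolding pent_def by simp
    have "1 \<le> f" using pf_props(3)[of k 1] pent_in[of "-1"] p1 f_def km by simp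
    then have r0: "r \<noteq> 0" using r pent0 by auto
    have E0: "e0 m = (if 0 \<le> r then sg r else 0)" using e0_closed[of m] ff Rf by simp
    have pw: "(-1::int) ^ nat (k - f) = sg (k - f)" using sg_pow[of "nat (k - f)"] fP(2) by simp
    have par: "(k mod 2 = f mod 2) = even (k - f)" by presburger
    show ?thesis unfolding pw par using main F0 E0 False Rf r0 unfolding cc_def sg_def by auto
  qed
  then show ?thesis unfolding Let_def k_def f_def .
qed


end
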